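(* Let $B\in\mathbb{R}^{n\times n}$ be symmetric, partitioned into $p\times p$ blocks $B_{st}\in\mathbb{R}^{n_s\times n_t}$, and let $\check B$ be its strictly block lower triangular part ($\check B_{st}=B_{st}$ if $s>t$, $0$ otherwise). If $\lambda_{\min}(B)<0$, then for every $\beta\in(0,\frac1{\rho(B)})$ the matrix $(I_n+\beta\check B)^{-1}B$ has at least one eigenvalue in $$\Omega=\{a+bi:\ a,b\in\mathbb{R},\ a\le 0,\ (a,b)\ne(0,0)\}.$$
   Context: $n_1,\dots,n_p$ are positive integers with $\sum_sn_s=n$; $\rho(B)$ denotes the spectral radius of $B$ and $\lambda_{\min}(B)$ its smallest eigenvalue. *)

theory Defs
  imports "Jordan_Normal_Form.Spectral_Radius" "Jordan_Normal_Form.Gauss_Jordan_Elimination"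
begin

text \<open>Block structure: the list ns = [n_1,...,n_p]; row/column index i (0-based)
  belongs to block s iff sum of n_r (r < s) <= i < sum of n_r (r <= s).\<close>
definition block_of :: "nat list \<Rightarrow> nat \<Rightarrow> nat" where
  "block_of ns i = (LEAST s. i < sum_list (take (Suc s) ns))"

definition block_lower :: "nat list \<Rightarrow> real mat \<Rightarrow> real mat" where
  "block_lower ns B = mat (dim_row B) (dim_col B)
     (\<lambda>(i,j). if block_of ns j < block_of ns i then B $$ (i,j) else 0)"

definition lambda_min :: "real mat \<Rightarrow> real" where
  "lambda_min B = Min {k. eigenvalue B k}"

definition Omega :: "complex set" where
  "Omega = {z. Re z \<le> 0 \<and> z \<noteq> 0}"

end

theory Submission
  imports Defs
begin


definition qf :: "(nat \<Rightarrow> nat \<Rightarrow> complex) \<Rightarrow> nat set \<Rightarrow> (nat \<Rightarrow> complex) \<Rightarrow> complex" where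
  "qf A I x = (\<Sum>i\<in>I. \<Sum>j\<in>I. cnj (x i) * A i j * x j)"

lemma qf_insert:
  assumes "finite I" "i0 \<notin> I"
  shows "qf A (insert i0 I) x = cnj (x i0) * A i0 i0 * x i0 + cnj (x i0) * (\<Sum>j\<in>I. A i0 j * x j)
     + (\<Sum>i\<in>I. cnj (x i) * A i i0) * x i0 + qf A I x"
  using assms by (simp add: qf_def sum.distrib sum_distrib_left sum_distrib_right algebra_simps)

lemma sq_id: fixes p x s :: complex assumes "p \<noteq> 0" "cnj p = p"
  shows "cnj x * p * x + cnj x * s + cnj s * x + cnj s * s / p = cnj (p * x + s) * (p * x + s) / p"
proof -
  have "cnj (p * x + s) * (p * x + s) / p = (p * cnj x + cnj s) * (p * x + s) / p" using assms by simp
  also have "\<dots> = cnj x * p * x + cnj x * s + cnj s * x + cnj s * s / p"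
    using assms(1) by (simp add: field_simps)
  finally show ?thesis by simp
qed
lemma sq_re: fixes p z :: complex assumes "Re p > 0" "Im p = 0"
  shows "Re (cnj z * z / p) \<ge> 0"
proof -
  have "p = complex_of_real (Re p)" using assms by (simp add: complex_eq_iff)
  then have "cnj z * z / p = complex_of_real ((cmod z)^2 / Re p)"
    by (metis complex_norm_square mult.commute of_real_divide)
  then show ?thesis using assms by simp
qed
lemma cs_div: fixes s t a p :: complex assumes "p = a * t" "t \<noteq> 0" "a \<noteq> 0"
  shows "cnj s / t * s / a = cnj s * s / p"
  using assms by (simp add: field_simps)

lemma real_part_lemma:
  fixes a t :: complex
  assumes "Re a > 0" "Re t \<ge> 0" "Im (a * t) = 0"
  shows "Re (a * t) \<ge> 0" "Re (a * t) = 0 \<Longrightarrow> t = 0"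
proof -
  have i: "Re a * Im t + Im a * Re t = 0" using assms(3) by simp
  have e: "Re a * Re (a * t) = Re t * (Re a ^ 2 + Im a ^ 2)"
  proof -
    have "Re a * Re (a * t) = Re a * Re a * Re t - Im a * (Re a * Im t)" by (simp add: algebra_simps)
    also have "Re a * Im t = - Im a * Re t" using i by simp
    finally show ?thesis by (simp add: power2_eq_square algebra_simps)
  qed
  have "Re t * (Re a ^ 2 + Im a ^ 2) \<ge> 0" using assms by simp
  then have "0 \<le> Re a * Re (a * t)" using e by simp
  then show "Re (a * t) \<ge> 0" using assms(1) by (simp add: zero_le_mult_iff)
  assume "Re (a * t) = 0"
  then have "Re t * (Re a ^ 2 + Im a ^ 2) = 0" using e by simp
  moreover have "Re a ^ 2 + Im a ^ 2 > 0" using assms(1) by (simp add: add_pos_nonneg)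
  ultimately have rt: "Re t = 0" by (metis less_irrefl mult_eq_0_iff)
  then have "Im t = 0" using i assms(1) by simp
  with rt show "t = 0" by (simp add: complex_eq_iff)
qed

lemma tri_aux:
  "card I = m \<Longrightarrow> finite I \<Longrightarrow>
   (\<And>i j. i\<in>I \<Longrightarrow> j\<in>I \<Longrightarrow> P j i = cnj (P i j)) \<Longrightarrow>
   (\<And>i j. i\<in>I \<Longrightarrow> j\<in>I \<Longrightarrow> P i j = (\<Sum>l\<in>I. N i l * T l j)) \<Longrightarrow>
   (\<And>i j. i\<in>I \<Longrightarrow> j\<in>I \<Longrightarrow> j < i \<Longrightarrow> T i j = 0) \<Longrightarrow>
   (\<And>i. i\<in>I \<Longrightarrow> Re (T i i) \<ge> 0) \<Longrightarrow>
   (\<And>x. (\<exists>i\<in>I. x i \<noteq> 0) \<Longrightarrow> Re (qf N I x) > 0) \<Longrightarrow>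
   Re (qf P I x) \<ge> 0"
proof (induction m arbitrary: I P N x)
  case 0
  then show ?case by (simp add: qf_def)
next
  case (Suc m)
  note fin = Suc.prems(2) and herm = Suc.prems(3) and fac = Suc.prems(4) and ut = Suc.prems(5)
    and dg = Suc.prems(6) and pd = Suc.prems(7)
  have ne: "I \<noteq> {}" using Suc.prems(1) by auto
  define i0 where "i0 = Min I"
  define J where "J = I - {i0}"
  have i0I: "i0 \<in> I" using fin ne i0_def by simp
  have IJ: "I = insert i0 J" and nJ: "i0 \<notin> J" and finJ: "finite J" using i0I fin by (auto simp: J_def)
  have cJ: "card J = m" using Suc.prems(1) IJ nJ finJ by simp
  have gt: "i0 < l" if "l \<in> J" for l
  proof -
    have "i0 \<le> l" using fin that unfolding J_def i0_def by simp
    moreover have "l \<noteq> i0" using that J_def by simp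
    ultimately show ?thesis by simp
  qed
  define a where "a = N i0 i0"
  define t where "t = T i0 i0"
  define p where "p = P i0 i0"
  define e :: "nat \<Rightarrow> complex" where "e = (\<lambda>i. if i = i0 then 1 else 0)"
  have inner: "(\<Sum>j\<in>I. cnj (e i) * N i j * e j) = cnj (e i) * N i i0" for i
  proof -
    have "(\<Sum>j\<in>I. cnj (e i) * N i j * e j) = cnj (e i) * N i i0 * e i0 + (\<Sum>j\<in>J. cnj (e i) * N i j * e j)"
      unfolding IJ using finJ nJ by simp
    also have "(\<Sum>j\<in>J. cnj (e i) * N i j * e j) = 0" using nJ by (intro sum.neutral) (auto simp: e_def)
    finally show ?thesis by (simp add: e_def)
  qed
  have qa: "qf N I e = a"
  proof -
    have "qf N I e = (\<Sum>i\<in>I. cnj (e i) * N i i0)" unfolding qf_def inner by simp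
    also have "\<dots> = cnj (e i0) * N i0 i0 + (\<Sum>i\<in>J. cnj (e i) * N i i0)"
      unfolding IJ using finJ nJ by simp
    also have "(\<Sum>i\<in>J. cnj (e i) * N i i0) = 0" using nJ by (intro sum.neutral) (auto simp: e_def)
    finally show ?thesis by (simp add: e_def a_def)
  qed
  have Rea: "Re a > 0" using pd[of e] qa i0I by (auto simp: e_def)
  hence a0: "a \<noteq> 0" by auto
  have Pi0: "P i i0 = N i i0 * t" if "i \<in> I" for i
  proof -
    have "P i i0 = (\<Sum>l\<in>insert i0 J. N i l * T l i0)" using fac[OF that i0I] IJ by simp
    also have "\<dots> = N i i0 * t + (\<Sum>l\<in>J. N i l * T l i0)" using finJ nJ t_def by simp
    also have "(\<Sum>l\<in>J. N i l * T l i0) = 0" using ut gt IJ i0I by (intro sum.neutral) auto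
    finally show ?thesis by simp
  qed
  have pat: "p = a * t" using Pi0[OF i0I] p_def a_def by simp
  have preal: "Im p = 0"
  proof -
    have "Im (P i0 i0) = Im (cnj (P i0 i0))" using herm[OF i0I i0I] by simp
    then show ?thesis unfolding p_def by simp
  qed
  have Rep: "Re p \<ge> 0" "Re p = 0 \<Longrightarrow> t = 0"
    using real_part_lemma[OF Rea dg[OF i0I, folded t_def]] preal pat by auto
  define N' where "N' i j = N i j - N i i0 * N i0 j / a" for i j
  define P' where "P' i j = P i j - N i i0 * P i0 j / a" for i j
  have Pi0j: "P i0 j = cnj t * cnj (N j i0)" if "j \<in> I" for j
    using herm[OF that i0I] Pi0[OF that] by simp
  have herm': "P' j i = cnj (P' i j)" if "i \<in> J" "j \<in> J" for i j
  proof -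
    have iI: "i \<in> I" and jI: "j \<in> I" using that IJ by auto
    have cp: "cnj p = p" using preal by (simp add: complex_eq_iff)
    have "cnj t / a = t / cnj a"
    proof -
      have "cnj t * cnj a = t * a" using cp pat by (simp add: mult.commute)
      then show ?thesis using a0 by (simp add: field_simps)
    qed
    note c = this
    have "N j i0 * P i0 i / a = N j i0 * cnj (N i i0) * (cnj t / a)" by (simp add: Pi0j[OF iI])
    also have "\<dots> = N j i0 * cnj (N i i0) * (t / cnj a)" using c by simp
    also have "\<dots> = cnj (N i i0 * P i0 j / a)" by (simp add: Pi0j[OF jI])
    finally show ?thesis unfolding P'_def using herm[OF iI jI] by simp
  qed
  have fac': "P' i j = (\<Sum>l\<in>J. N' i l * T l j)" if "i \<in> J" "j \<in> J" for i j
  proof -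
    have iI: "i \<in> I" and jI: "j \<in> I" using that IJ by auto
    have e1: "P i j = N i i0 * T i0 j + (\<Sum>l\<in>J. N i l * T l j)"
      using fac[OF iI jI] IJ finJ nJ by simp
    have e2: "P i0 j = a * T i0 j + (\<Sum>l\<in>J. N i0 l * T l j)"
      using fac[OF i0I jI] IJ finJ nJ a_def by simp
    have "P' i j = (\<Sum>l\<in>J. N i l * T l j) - N i i0 / a * (\<Sum>l\<in>J. N i0 l * T l j)"
      unfolding P'_def e1 e2 using a0 by (simp add: field_simps)
    also have "\<dots> = (\<Sum>l\<in>J. N' i l * T l j)"
      unfolding N'_def by (simp add: sum_distrib_left sum_subtractf[symmetric] algebra_simps)
    finally show ?thesis .
  qed
  have pd': "Re (qf N' J x) > 0" if "\<exists>i\<in>J. x i \<noteq> 0" for x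
  proof -
    define s where "s = (\<Sum>j\<in>J. N i0 j * x j)"
    define y where "y = x(i0 := - s / a)"
    have yJ: "\<And>j. j \<in> J \<Longrightarrow> y j = x j" using nJ y_def by auto
    have sy: "(\<Sum>j\<in>J. N i0 j * y j) = s" using yJ s_def by simp
    have qJ: "qf N J y = qf N J x" unfolding qf_def using yJ by simp
    have sy2: "(\<Sum>i\<in>J. cnj (y i) * N i i0) = (\<Sum>i\<in>J. cnj (x i) * N i i0)" using yJ by simp
    have "qf N I y = cnj (y i0) * (a * y i0 + s) + (\<Sum>i\<in>J. cnj (x i) * N i i0) * y i0 + qf N J x"
      unfolding IJ qf_insert[OF finJ nJ] sy qJ sy2 a_def by (simp add: algebra_simps)
    also have "a * y i0 + s = 0" using a0 y_def by simp
    finally have "qf N I y = cnj (y i0) * 0 + (\<Sum>i\<in>J. cnj (x i) * N i i0) * y i0 + qf N J x" .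
    moreover have "qf N J x = qf N' J x + (\<Sum>i\<in>J. cnj (x i) * N i i0) * s / a"
      unfolding qf_def N'_def s_def
      by (simp add: sum_subtractf sum_distrib_left sum_distrib_right sum_divide_distrib algebra_simps)
    moreover have y0: "y i0 = - s / a" using y_def by simp
    ultimately have "qf N I y = qf N' J x" by (simp add: algebra_simps)
    moreover have "\<exists>i\<in>I. y i \<noteq> 0" using that yJ IJ by auto
    ultimately show ?thesis using pd by metis
  qed
  have IH: "Re (qf P' J z) \<ge> 0" for z
    by (rule Suc.IH[OF cJ finJ herm' fac']) (use ut dg IJ pd' in auto)
  define s where "s = (\<Sum>j\<in>J. P i0 j * x j)"
  have cs: "(\<Sum>i\<in>J. cnj (x i) * P i i0) = cnj s"
    unfolding s_def cnj_sum
  proof (intro sum.cong refl)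
    fix i assume "i \<in> J"
    then have "P i i0 = cnj (P i0 i)" using herm[OF i0I, of i] IJ by simp
    then show "cnj (x i) * P i i0 = cnj (P i0 i * x i)" by simp
  qed
  have qP: "qf P I x = cnj (x i0) * p * x i0 + cnj (x i0) * s + cnj s * x i0 + qf P J x"
    unfolding IJ qf_insert[OF finJ nJ] cs s_def p_def by simp
  show ?case
  proof (cases "t = 0")
    case True
    have z: "P i0 j = 0" if "j \<in> I" for j using Pi0j[OF that] True by simp
    have "s = 0" unfolding s_def using z IJ by simp
    moreover have "p = 0" using z i0I p_def by simp
    moreover have "qf P J x = qf P' J x" unfolding qf_def P'_def using z IJ by simp
    ultimately show ?thesis using qP IH by simp
  next
    case False
    have pp: "Re p > 0" using Rep False by linarith
    have pR: "p = complex_of_real (Re p)" using preal by (simp add: complex_eq_iff)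
    have "qf P J x = qf P' J x + (\<Sum>i\<in>J. cnj (x i) * N i i0) * s / a"
      unfolding qf_def P'_def s_def
      by (simp add: sum_subtractf sum_distrib_left sum_distrib_right sum_divide_distrib algebra_simps)
    also have "(\<Sum>i\<in>J. cnj (x i) * N i i0) = cnj s / t"
    proof -
      have "cnj s = (\<Sum>i\<in>J. cnj (x i) * N i i0) * t" using cs Pi0 IJ
        by (simp add: sum_distrib_left sum_distrib_right algebra_simps)
      then show ?thesis using False by simp
    qed
    also have "cnj s / t * s / a = cnj s * s / p" using cs_div[OF pat False a0] .
    finally have qJ: "qf P J x = qf P' J x + cnj s * s / p" .
    have p0: "p \<noteq> 0" using pp by auto
    have cp: "cnj p = p" using preal by (simp add: complex_eq_iff)
    have key: "Re (cnj (x i0) * p * x i0 + cnj (x i0) * s + cnj s * x i0 + cnj s * s / p) \<ge> 0"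
      unfolding sq_id[OF p0 cp] using sq_re[OF pp preal] .
    show ?thesis using qP qJ IH[of x] key by simp
  qed
qed




lemma mult2_idx: assumes "A \<in> carrier_mat n n" "B \<in> carrier_mat n n" "i < n" "j < n"
  shows "(A * B) $$ (i,j) = (\<Sum>l\<in>{0..<n}. A $$ (i,l) * B $$ (l,j))"
  using assms by (simp add: scalar_prod_def)

lemma mulvec_idx: assumes "A \<in> carrier_mat n n" "v \<in> carrier_vec n" "i < n"
  shows "(A *\<^sub>v v) $ i = (\<Sum>j\<in>{0..<n}. A $$ (i,j) * v $ j)"
  using assms by (simp add: scalar_prod_def)

lemma mult3_idx: assumes "A \<in> carrier_mat n n" "B \<in> carrier_mat n n" "C \<in> carrier_mat n n" "i < n" "j < n"
  shows "(A * B * C) $$ (i,j) = (\<Sum>k\<in>{0..<n}. \<Sum>l\<in>{0..<n}. A $$ (i,k) * B $$ (k,l) * C $$ (l,j))"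
proof -
  have "(A * B * C) $$ (i,j) = (\<Sum>l\<in>{0..<n}. (A * B) $$ (i,l) * C $$ (l,j))"
    using assms by (intro mult2_idx) auto
  also have "\<dots> = (\<Sum>l\<in>{0..<n}. \<Sum>k\<in>{0..<n}. A $$ (i,k) * B $$ (k,l) * C $$ (l,j))"
    using assms by (intro sum.cong refl) (simp add: scalar_prod_def sum_distrib_right)
  also have "\<dots> = (\<Sum>k\<in>{0..<n}. \<Sum>l\<in>{0..<n}. A $$ (i,k) * B $$ (k,l) * C $$ (l,j))"
    by (rule sum.swap)
  finally show ?thesis .
qed

lemma qf_congr:
  fixes A s :: "nat \<Rightarrow> nat \<Rightarrow> complex"
  assumes "finite I"
  shows "qf (\<lambda>i j. \<Sum>k\<in>I. \<Sum>l\<in>I. cnj (s k i) * A k l * s l j) I y = qf A I (\<lambda>k. \<Sum>i\<in>I. s k i * y i)"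
proof -
  have "qf (\<lambda>i j. \<Sum>k\<in>I. \<Sum>l\<in>I. cnj (s k i) * A k l * s l j) I y
     = (\<Sum>i\<in>I. \<Sum>j\<in>I. \<Sum>k\<in>I. \<Sum>l\<in>I. cnj (y i) * cnj (s k i) * A k l * s l j * y j)"
    unfolding qf_def by (simp add: sum_distrib_left sum_distrib_right mult.assoc)
  also have "\<dots> = (\<Sum>i\<in>I. \<Sum>k\<in>I. \<Sum>j\<in>I. \<Sum>l\<in>I. cnj (y i) * cnj (s k i) * A k l * s l j * y j)"
    by (intro sum.cong refl sum.swap)
  also have "\<dots> = (\<Sum>i\<in>I. \<Sum>k\<in>I. \<Sum>l\<in>I. \<Sum>j\<in>I. cnj (y i) * cnj (s k i) * A k l * s l j * y j)"
    by (intro sum.cong refl sum.swap)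
  also have "\<dots> = (\<Sum>k\<in>I. \<Sum>i\<in>I. \<Sum>l\<in>I. \<Sum>j\<in>I. cnj (y i) * cnj (s k i) * A k l * s l j * y j)"
    by (rule sum.swap)
  also have "\<dots> = (\<Sum>k\<in>I. \<Sum>l\<in>I. \<Sum>i\<in>I. \<Sum>j\<in>I. cnj (y i) * cnj (s k i) * A k l * s l j * y j)"
    by (intro sum.cong refl sum.swap)
  also have "\<dots> = (\<Sum>k\<in>I. \<Sum>l\<in>I. \<Sum>j\<in>I. \<Sum>i\<in>I. cnj (y i) * cnj (s k i) * A k l * s l j * y j)"
    by (intro sum.cong refl sum.swap)
  also have "\<dots> = qf A I (\<lambda>k. \<Sum>i\<in>I. s k i * y i)"
    unfolding qf_def by (simp add: sum_distrib_left sum_distrib_right cnj_sum mult.assoc mult.left_commute)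
  finally show ?thesis .
qed


lemma qf_cong_on: assumes "\<And>i j. i \<in> I \<Longrightarrow> j \<in> I \<Longrightarrow> A i j = B i j" "\<And>i. i \<in> I \<Longrightarrow> x i = y i"
  shows "qf A I x = qf B I y"
  unfolding qf_def using assms by (intro sum.cong refl) auto

lemma psd_factor:
  fixes P N T :: "complex mat"
  assumes T: "T \<in> carrier_mat n n" and N: "N \<in> carrier_mat n n" and PNT: "P = N * T"
  and herm: "\<And>i j. i<n \<Longrightarrow> j<n \<Longrightarrow> P $$ (j,i) = cnj (P $$ (i,j))"
  and pd: "\<And>x. (\<exists>i\<in>{0..<n}. x i \<noteq> 0) \<Longrightarrow> Re (qf (\<lambda>i j. N $$ (i,j)) {0..<n} x) > 0"
  and ev: "\<And>k. eigenvalue T k \<Longrightarrow> Re k \<ge> 0"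
  shows "Re (qf (\<lambda>i j. P $$ (i,j)) {0..<n} x) \<ge> 0"
proof -
  have P: "P \<in> carrier_mat n n" using PNT N T by simp
  from char_poly_factorized[OF T] obtain es where cp: "char_poly T = (\<Prod>a\<leftarrow>es. [:-a,1:])" by auto
  obtain U S S' where sd: "schur_decomposition T es = (U,S,S')" by (cases "schur_decomposition T es") auto
  from schur_decomposition[OF T cp sd] have sim: "similar_mat_wit T U S S'" and ut: "upper_triangular U"
    and dg: "diag_mat U = es" by auto
  from sim T have U: "U \<in> carrier_mat n n" and S: "S \<in> carrier_mat n n" and S': "S' \<in> carrier_mat n n"
    and SS': "S * S' = 1\<^sub>m n" and S'S: "S' * S = 1\<^sub>m n" and TU: "T = S * U * S'"
    unfolding similar_mat_wit_def Let_def by auto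
  have evU: "Re (U $$ (i,i)) \<ge> 0" if "i < n" for i
  proof -
    have len: "length es = n" using dg U by (auto simp: diag_mat_def)
    have ui: "U $$ (i,i) = es ! i" using dg that U by (auto simp: diag_mat_def)
    have "es ! i \<in> set es" using len that by simp
    hence "poly (char_poly T) (es!i) = 0" using cp linear_poly_root by metis
    hence "eigenvalue T (es!i)" using eigenvalue_root_char_poly[OF T] by simp
    thus ?thesis using ev ui by simp
  qed
  define SH where "SH = mat n n (\<lambda>(i,j). cnj (S $$ (j,i)))"
  have SH: "SH \<in> carrier_mat n n" unfolding SH_def by simp
  define P' where "P' = SH * P * S"
  define N' where "N' = SH * N * S"
  have P': "P' \<in> carrier_mat n n" and N': "N' \<in> carrier_mat n n" using SH P N S by (auto simp: P'_def N'_def)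
  have P'N'U: "P' = N' * U"
    unfolding P'_def N'_def PNT TU using SH N S U S'
    by (simp add: assoc_mult_mat[of _ n n _ n _ n] S'S)
  have P'idx: "P' $$ (i,j) = (\<Sum>k\<in>{0..<n}. \<Sum>l\<in>{0..<n}. cnj (S $$ (k,i)) * P $$ (k,l) * S $$ (l,j))"
    if "i < n" "j < n" for i j
    unfolding P'_def using mult3_idx[OF SH P S that] that by (simp add: SH_def)
  have N'idx: "N' $$ (i,j) = (\<Sum>k\<in>{0..<n}. \<Sum>l\<in>{0..<n}. cnj (S $$ (k,i)) * N $$ (k,l) * S $$ (l,j))"
    if "i < n" "j < n" for i j
    unfolding N'_def using mult3_idx[OF SH N S that] that by (simp add: SH_def)
  have hk: "cnj (P $$ (k,l)) = P $$ (l,k)" if "k < n" "l < n" for k l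
    using herm[OF that] by simp
  have herm': "P' $$ (j,i) = cnj (P' $$ (i,j))" if "i < n" "j < n" for i j
  proof -
    have "cnj (P' $$ (i,j)) = (\<Sum>k\<in>{0..<n}. \<Sum>l\<in>{0..<n}. S $$ (k,i) * cnj (P $$ (k,l)) * cnj (S $$ (l,j)))"
      using P'idx[OF that] by (simp add: cnj_sum)
    also have "\<dots> = (\<Sum>k\<in>{0..<n}. \<Sum>l\<in>{0..<n}. S $$ (k,i) * P $$ (l,k) * cnj (S $$ (l,j)))"
      using hk by (intro sum.cong refl) simp
    also have "\<dots> = (\<Sum>l\<in>{0..<n}. \<Sum>k\<in>{0..<n}. S $$ (k,i) * P $$ (l,k) * cnj (S $$ (l,j)))"
      by (rule sum.swap)
    also have "\<dots> = P' $$ (j,i)" using P'idx[of j i] that by (simp add: ac_simps)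
    finally show ?thesis by simp
  qed
  have qfP': "qf (\<lambda>i j. P' $$ (i,j)) {0..<n} y = qf (\<lambda>i j. P $$ (i,j)) {0..<n} (\<lambda>k. \<Sum>i\<in>{0..<n}. S $$ (k,i) * y i)" for y
  proof -
    have "qf (\<lambda>i j. P' $$ (i,j)) {0..<n} y = qf (\<lambda>i j. \<Sum>k\<in>{0..<n}. \<Sum>l\<in>{0..<n}. cnj (S $$ (k,i)) * P $$ (k,l) * S $$ (l,j)) {0..<n} y"
      using P'idx by (intro qf_cong_on) auto
    also have "\<dots> = qf (\<lambda>i j. P $$ (i,j)) {0..<n} (\<lambda>k. \<Sum>i\<in>{0..<n}. S $$ (k,i) * y i)"
      by (rule qf_congr) simp
    finally show ?thesis .
  qed
  have qfN': "qf (\<lambda>i j. N' $$ (i,j)) {0..<n} y = qf (\<lambda>i j. N $$ (i,j)) {0..<n} (\<lambda>k. \<Sum>i\<in>{0..<n}. S $$ (k,i) * y i)" for y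
  proof -
    have "qf (\<lambda>i j. N' $$ (i,j)) {0..<n} y = qf (\<lambda>i j. \<Sum>k\<in>{0..<n}. \<Sum>l\<in>{0..<n}. cnj (S $$ (k,i)) * N $$ (k,l) * S $$ (l,j)) {0..<n} y"
      using N'idx by (intro qf_cong_on) auto
    also have "\<dots> = qf (\<lambda>i j. N $$ (i,j)) {0..<n} (\<lambda>k. \<Sum>i\<in>{0..<n}. S $$ (k,i) * y i)"
      by (rule qf_congr) simp
    finally show ?thesis .
  qed
  have Sv: "(S *\<^sub>v vec n y) $ k = (\<Sum>i\<in>{0..<n}. S $$ (k,i) * y i)" if "k < n" for y k
    using mulvec_idx[OF S _ that, of "vec n y"] by simp
  have pd': "Re (qf (\<lambda>i j. N' $$ (i,j)) {0..<n} y) > 0" if "\<exists>i\<in>{0..<n}. y i \<noteq> 0" for y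
  proof -
    have "\<exists>k\<in>{0..<n}. (\<Sum>i\<in>{0..<n}. S $$ (k,i) * y i) \<noteq> 0"
    proof (rule ccontr)
      assume "\<not> ?thesis"
      hence "S *\<^sub>v vec n y = 0\<^sub>v n" using Sv S by (intro eq_vecI) auto
      hence "S' *\<^sub>v (S *\<^sub>v vec n y) = 0\<^sub>v n" using S' by (intro eq_vecI) auto
      moreover have "S' *\<^sub>v (S *\<^sub>v vec n y) = vec n y"
        using S S' S'S by (simp add: assoc_mult_mat_vec[symmetric, of _ n n _ n])
      ultimately have "vec n y = 0\<^sub>v n" by simp
      thus False using that by (metis atLeastLessThan_iff index_vec index_zero_vec(1))
    qed
    thus ?thesis unfolding qfN' by (rule pd)
  qed
  have tri: "Re (qf (\<lambda>i j. P' $$ (i,j)) {0..<n} y) \<ge> 0" for y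
  proof (rule tri_aux[OF refl, of _ _ "\<lambda>i j. N' $$ (i,j)" "\<lambda>i j. U $$ (i,j)"])
    show "finite {0..<n}" by simp
    show "P' $$ (j,i) = cnj (P' $$ (i,j))" if "i \<in> {0..<n}" "j \<in> {0..<n}" for i j
      using that by (intro herm') auto
    show "P' $$ (i,j) = (\<Sum>l\<in>{0..<n}. N' $$ (i,l) * U $$ (l,j))" if "i \<in> {0..<n}" "j \<in> {0..<n}" for i j
      unfolding P'N'U using mult2_idx[OF N' U] that by simp
    show "U $$ (i,j) = 0" if "i \<in> {0..<n}" "j \<in> {0..<n}" "j < i" for i j
      using ut that U by auto
    show "Re (U $$ (i,i)) \<ge> 0" if "i \<in> {0..<n}" for i using evU that by simp
    show "Re (qf (\<lambda>i j. N' $$ (i,j)) {0..<n} y) > 0" if "\<exists>i\<in>{0..<n}. y i \<noteq> 0" for y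
      using pd' that by simp
  qed
  define y where "y = (\<lambda>i. (S' *\<^sub>v vec n x) $ i)"
  have "S *\<^sub>v (S' *\<^sub>v vec n x) = vec n x"
    using S S' SS' by (simp add: assoc_mult_mat_vec[symmetric, of _ n n _ n])
  hence xy: "(\<Sum>i\<in>{0..<n}. S $$ (k,i) * y i) = x k" if "k < n" for k
  proof -
    have "(\<Sum>i\<in>{0..<n}. S $$ (k,i) * y i) = (S *\<^sub>v (S' *\<^sub>v vec n x)) $ k"
      unfolding y_def using mulvec_idx[OF S _ that, of "S' *\<^sub>v vec n x"] S' by simp
    also have "\<dots> = x k" using \<open>S *\<^sub>v (S' *\<^sub>v vec n x) = vec n x\<close> that by simp
    finally show ?thesis .
  qed
  have "qf (\<lambda>i j. P $$ (i,j)) {0..<n} x = qf (\<lambda>i j. P' $$ (i,j)) {0..<n} y"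
    unfolding qfP' using xy by (intro qf_cong_on) auto
  thus ?thesis using tri by simp
qed




definition rq :: "(nat \<Rightarrow> nat \<Rightarrow> real) \<Rightarrow> nat set \<Rightarrow> (nat \<Rightarrow> real) \<Rightarrow> real" where
  "rq A I a = (\<Sum>i\<in>I. \<Sum>j\<in>I. a i * A i j * a j)"

lemma delta_sum: "finite I \<Longrightarrow> i \<in> I \<Longrightarrow> (\<Sum>j\<in>I. (f j :: 'a :: comm_ring_1) * (if i = j then r else 0)) = f i * r"
  by (simp add: if_distrib cong: if_cong)

lemma psd_shift:
  fixes B :: "real mat" and c :: complex
  assumes B: "B \<in> carrier_mat n n" and sym: "\<And>i j. i<n \<Longrightarrow> j<n \<Longrightarrow> B$$(j,i) = B$$(i,j)" and n: "n>0"
    and c: "c = 1 \<or> c = -1"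
  defines "Bc \<equiv> map_mat complex_of_real B"
  defines "\<rho> \<equiv> spectral_radius Bc"
  shows "Re (qf (\<lambda>i j. (complex_of_real \<rho> \<cdot>\<^sub>m 1\<^sub>m n + c \<cdot>\<^sub>m Bc) $$ (i,j)) {0..<n} x) \<ge> 0"
proof -
  define P where "P = complex_of_real \<rho> \<cdot>\<^sub>m 1\<^sub>m n + c \<cdot>\<^sub>m Bc"
  have Bc: "Bc \<in> carrier_mat n n" using B Bc_def by simp
  have P: "P \<in> carrier_mat n n" using Bc P_def by simp
  have Pidx: "P $$ (i,j) = (if i = j then complex_of_real \<rho> else 0) + c * complex_of_real (B $$ (i,j))"
    if "i < n" "j < n" for i j using that B unfolding P_def Bc_def by simp
  have cc: "c * c = 1" using c by auto
  show ?thesis unfolding P_def[symmetric]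
  proof (rule psd_factor[OF P one_carrier_mat])
    show "P = 1\<^sub>m n * P" using P by simp
    show "P $$ (j,i) = cnj (P $$ (i,j))" if "i < n" "j < n" for i j
      using that Pidx sym c by auto
    show "Re (qf (\<lambda>i j. 1\<^sub>m n $$ (i,j)) {0..<n} y) > 0" if "\<exists>i\<in>{0..<n}. y i \<noteq> 0" for y
    proof -
      have "qf (\<lambda>i j. 1\<^sub>m n $$ (i,j)) {0..<n} y = (\<Sum>i\<in>{0..<n}. cnj (y i) * y i)"
        unfolding qf_def by (intro sum.cong refl) (simp add: if_distrib if_distribR cong: if_cong)
      also have "\<dots> = complex_of_real (\<Sum>i\<in>{0..<n}. (cmod (y i))^2)"
        unfolding of_real_sum by (intro sum.cong refl) (metis complex_norm_square mult.commute)
      finally have e: "Re (qf (\<lambda>i j. 1\<^sub>m n $$ (i,j)) {0..<n} y) = (\<Sum>i\<in>{0..<n}. (cmod (y i))^2)" by simp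
      from that obtain i where i: "i \<in> {0..<n}" "y i \<noteq> 0" by auto
      have "(\<Sum>i\<in>{0..<n}. (cmod (y i))^2) > 0"
        by (rule sum_pos2[OF _ i(1)]) (use i in auto)
      thus ?thesis using e by simp
    qed
    show "Re k \<ge> 0" if "eigenvalue P k" for k
    proof -
      from that obtain v where v: "v \<in> carrier_vec n" "v \<noteq> 0\<^sub>v n" "P *\<^sub>v v = k \<cdot>\<^sub>v v"
        unfolding eigenvalue_def eigenvector_def using P by auto
      have comp: "(Bc *\<^sub>v v) $ i = c * (k - complex_of_real \<rho>) * v $ i" if "i < n" for i
      proof -
        have "(P *\<^sub>v v) $ i = k * v $ i" using v(3) v(1) that by simp
        moreover have "(P *\<^sub>v v) $ i = complex_of_real \<rho> * v $ i + c * (Bc *\<^sub>v v) $ i"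
        proof -
          have "(P *\<^sub>v v) $ i = (\<Sum>j\<in>{0..<n}. P $$ (i,j) * v $ j)" by (rule mulvec_idx[OF P v(1) that])
          also have "\<dots> = (\<Sum>j\<in>{0..<n}. v $ j * (if i = j then complex_of_real \<rho> else 0) + c * (Bc $$ (i,j) * v $ j))"
            using Pidx that B by (intro sum.cong refl) (auto simp: Bc_def algebra_simps)
          also have "\<dots> = v $ i * complex_of_real \<rho> + c * (\<Sum>j\<in>{0..<n}. Bc $$ (i,j) * v $ j)"
            using that by (simp add: sum.distrib sum_distrib_left delta_sum)
          also have "(\<Sum>j\<in>{0..<n}. Bc $$ (i,j) * v $ j) = (Bc *\<^sub>v v) $ i"
            by (rule mulvec_idx[OF Bc v(1) that, symmetric])
          finally show ?thesis by (simp add: mult.commute)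
        qed
        ultimately have "k * v $ i = complex_of_real \<rho> * v $ i + c * (Bc *\<^sub>v v) $ i" by simp
        hence "c * (k * v $ i) = c * complex_of_real \<rho> * v $ i + (c * c) * (Bc *\<^sub>v v) $ i"
          by (simp add: algebra_simps)
        thus ?thesis using cc by (simp add: algebra_simps)
      qed
      have "Bc *\<^sub>v v = (c * (k - complex_of_real \<rho>)) \<cdot>\<^sub>v v"
        using comp v(1) Bc by (intro eq_vecI) auto
      hence "eigenvalue Bc (c * (k - complex_of_real \<rho>))"
        unfolding eigenvalue_def eigenvector_def using v Bc by auto
      hence "norm (c * (k - complex_of_real \<rho>)) \<le> \<rho>"
        unfolding \<rho>_def by (intro spectral_radius_mem_max(2)[OF Bc n]) (auto simp: spectrum_def)
      hence "cmod (k - complex_of_real \<rho>) \<le> \<rho>" using c by (auto simp: norm_mult)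
      moreover have "\<rho> - Re k \<le> cmod (k - complex_of_real \<rho>)"
        using abs_Re_le_cmod[of "k - complex_of_real \<rho>"] by simp
      ultimately show ?thesis by simp
    qed
  qed
qed


lemma rq_bound:
  fixes B :: "real mat"
  assumes B: "B \<in> carrier_mat n n" and sym: "\<And>i j. i<n \<Longrightarrow> j<n \<Longrightarrow> B$$(j,i) = B$$(i,j)" and n: "n>0"
  shows "\<bar>rq (\<lambda>i j. B$$(i,j)) {0..<n} a\<bar> \<le> spectral_radius (map_mat complex_of_real B) * (\<Sum>i\<in>{0..<n}. (a i)^2)"
proof -
  define \<rho> where "\<rho> = spectral_radius (map_mat complex_of_real B)"
  define x where "x = (\<lambda>i. complex_of_real (a i))"
  have key: "Re (qf (\<lambda>i j. (complex_of_real \<rho> \<cdot>\<^sub>m 1\<^sub>m n + c \<cdot>\<^sub>m map_mat complex_of_real B) $$ (i,j)) {0..<n} x)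
     = \<rho> * (\<Sum>i\<in>{0..<n}. (a i)^2) + Re c * rq (\<lambda>i j. B$$(i,j)) {0..<n} a" if c: "c = 1 \<or> c = -1" for c
  proof -
    have "qf (\<lambda>i j. (complex_of_real \<rho> \<cdot>\<^sub>m 1\<^sub>m n + c \<cdot>\<^sub>m map_mat complex_of_real B) $$ (i,j)) {0..<n} x
      = (\<Sum>i\<in>{0..<n}. \<Sum>j\<in>{0..<n}. (x i * x j) * (if i = j then complex_of_real \<rho> else 0) + c * (x i * complex_of_real (B $$ (i,j)) * x j))"
      unfolding qf_def x_def using B by (intro sum.cong refl) (auto simp: algebra_simps)
    also have "\<dots> = (\<Sum>i\<in>{0..<n}. x i * x i * complex_of_real \<rho>) + c * (\<Sum>i\<in>{0..<n}. \<Sum>j\<in>{0..<n}. x i * complex_of_real (B $$ (i,j)) * x j)"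
      by (simp add: sum.distrib sum_distrib_left delta_sum)
    also have "\<dots> = complex_of_real (\<rho> * (\<Sum>i\<in>{0..<n}. (a i)^2)) + c * complex_of_real (rq (\<lambda>i j. B$$(i,j)) {0..<n} a)"
      unfolding rq_def x_def by (simp add: sum_distrib_left power2_eq_square mult.commute)
    finally show ?thesis using c by auto
  qed
  have "0 \<le> \<rho> * (\<Sum>i\<in>{0..<n}. (a i)^2) + Re c * rq (\<lambda>i j. B$$(i,j)) {0..<n} a" if c: "c = 1 \<or> c = -1" for c
    using key[OF c] psd_shift[OF B sym n c, of x] unfolding \<rho>_def by simp
  from this[of 1] this[of "-1"] show ?thesis unfolding \<rho>_def by simp
qed


lemma rq_add: "rq (\<lambda>i j. A i j + C i j) I a = rq A I a + rq C I a"
  unfolding rq_def by (simp add: sum.distrib algebra_simps)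

lemma rq_scale: "rq (\<lambda>i j. c * A i j) I a = c * rq A I a"
  unfolding rq_def by (simp add: sum_distrib_left algebra_simps)

lemma delta2: assumes "finite I" "x \<in> I"
  shows "(\<Sum>j\<in>I. (f x :: real) * (if x = j then 1 else 0) * g j) = f x * g x"
proof -
  have "(\<Sum>j\<in>I. f x * (if x = j then 1 else 0) * g j) = (\<Sum>j\<in>I. if j = x then f x * g j else 0)"
    by (rule sum.cong) auto
  thus ?thesis using assms by simp
qed

lemma M_pos:
  fixes B :: "real mat" and bl :: "nat \<Rightarrow> nat" and \<beta> :: real
  assumes B: "B \<in> carrier_mat n n" and sym: "\<And>i j. i<n \<Longrightarrow> j<n \<Longrightarrow> B$$(j,i) = B$$(i,j)" and n: "n>0"
    and b0: "\<beta> \<ge> 0"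
  shows "rq (\<lambda>i j. (if i = j then 1 else 0) + \<beta> * (if bl j < bl i then B$$(i,j) else 0)) {0..<n} a
    \<ge> (1 - \<beta> * spectral_radius (map_mat complex_of_real B)) * (\<Sum>i\<in>{0..<n}. (a i)^2)"
proof -
  define \<rho> where "\<rho> = spectral_radius (map_mat complex_of_real B)"
  define I where "I = {0..<n}"
  define Q where "Q = (\<Sum>i\<in>I. (a i)^2)"
  define rL where "rL = rq (\<lambda>i j. if bl j < bl i then B$$(i,j) else 0) I a"
  define rU where "rU = rq (\<lambda>i j. if bl i < bl j then B$$(i,j) else 0) I a"
  define rD where "rD = rq (\<lambda>i j. if bl i = bl j then B$$(i,j) else 0) I a"
  define rB where "rB = rq (\<lambda>i j. B$$(i,j)) I a"
  have fI: "finite I" unfolding I_def by simp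
  have "rB = rq (\<lambda>i j. ((if bl j < bl i then B$$(i,j) else 0) + (if bl i < bl j then B$$(i,j) else 0))
      + (if bl i = bl j then B$$(i,j) else 0)) I a"
    unfolding rB_def rq_def by (intro sum.cong refl) auto
  hence rBe: "rB = rL + rU + rD" unfolding rL_def rU_def rD_def rq_add by simp
  have "rU = (\<Sum>j\<in>I. \<Sum>i\<in>I. a i * (if bl i < bl j then B$$(i,j) else 0) * a j)"
    unfolding rU_def rq_def by (rule sum.swap)
  also have "\<dots> = rL" unfolding rL_def rq_def
  proof (intro sum.cong refl)
    fix j i assume "j \<in> I" "i \<in> I"
    hence "B$$(i,j) = B$$(j,i)" using sym[of j i] unfolding I_def by simp
    thus "a i * (if bl i < bl j then B$$(i,j) else 0) * a j = a j * (if bl i < bl j then B$$(j,i) else 0) * a i"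
      by simp
  qed
  finally have rUL: "rU = rL" .
  define S where "S = bl ` I"
  define m where "m s i = (if bl i = s then a i else 0)" for s i
  have fS: "finite S" unfolding S_def using fI by simp
  have ind: "(\<Sum>s\<in>S. (if bl i = s then (1::real) else 0) * (if bl j = s then 1 else 0)) = (if bl i = bl j then 1 else 0)"
    if "i \<in> I" for i j
  proof -
    have bi: "bl i \<in> S" using that S_def by simp
    have "(\<Sum>s\<in>S. (if bl i = s then (1::real) else 0) * (if bl j = s then 1 else 0))
        = (\<Sum>s\<in>S. if s = bl i then (if bl i = bl j then 1 else 0) else 0)"
      by (rule sum.cong) auto
    also have "\<dots> = (if bl i = bl j then 1 else 0)" using fS bi by (simp only: sum.delta) simp
    finally show ?thesis .
  qed
  have "rD = (\<Sum>i\<in>I. \<Sum>j\<in>I. \<Sum>s\<in>S. m s i * B$$(i,j) * m s j)"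
    unfolding rD_def rq_def
  proof (intro sum.cong refl)
    fix i j assume i: "i \<in> I" and "j \<in> I"
    have "(\<Sum>s\<in>S. m s i * B$$(i,j) * m s j) = (\<Sum>s\<in>S. a i * B$$(i,j) * a j * ((if bl i = s then (1::real) else 0) * (if bl j = s then 1 else 0)))"
      by (rule sum.cong[OF refl]) (simp add: m_def)
    also have "\<dots> = a i * B$$(i,j) * a j * (\<Sum>s\<in>S. (if bl i = s then (1::real) else 0) * (if bl j = s then 1 else 0))"
      by (rule sum_distrib_left[symmetric])
    also have "\<dots> = a i * (if bl i = bl j then B$$(i,j) else 0) * a j" using ind[OF i, of j] by simp
    finally show "a i * (if bl i = bl j then B$$(i,j) else 0) * a j = (\<Sum>s\<in>S. m s i * B$$(i,j) * m s j)" by simp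
  qed
  also have "\<dots> = (\<Sum>i\<in>I. \<Sum>s\<in>S. \<Sum>j\<in>I. m s i * B$$(i,j) * m s j)"
    by (intro sum.cong refl sum.swap)
  also have "\<dots> = (\<Sum>s\<in>S. \<Sum>i\<in>I. \<Sum>j\<in>I. m s i * B$$(i,j) * m s j)"
    by (rule sum.swap)
  also have "\<dots> = (\<Sum>s\<in>S. rq (\<lambda>i j. B$$(i,j)) I (m s))"
    unfolding rq_def by simp
  finally have rDe: "rD = (\<Sum>s\<in>S. rq (\<lambda>i j. B$$(i,j)) I (m s))" .
  have "(\<Sum>s\<in>S. \<Sum>i\<in>I. (m s i)^2) = (\<Sum>i\<in>I. \<Sum>s\<in>S. (m s i)^2)" by (rule sum.swap)
  also have "\<dots> = Q" unfolding Q_def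
  proof (intro sum.cong refl)
    fix i assume i: "i \<in> I"
    have "(\<Sum>s\<in>S. (m s i)^2) = (\<Sum>s\<in>S. (a i)^2 * ((if bl i = s then (1::real) else 0) * (if bl i = s then 1 else 0)))"
      by (rule sum.cong[OF refl]) (simp add: m_def)
    also have "\<dots> = (a i)^2 * (\<Sum>s\<in>S. (if bl i = s then (1::real) else 0) * (if bl i = s then 1 else 0))"
      by (rule sum_distrib_left[symmetric])
    finally show "(\<Sum>s\<in>S. (m s i)^2) = (a i)^2" using ind[OF i, of i] by simp
  qed
  finally have mQ: "(\<Sum>s\<in>S. \<Sum>i\<in>I. (m s i)^2) = Q" .
  have bnd: "\<bar>rq (\<lambda>i j. B$$(i,j)) I b\<bar> \<le> \<rho> * (\<Sum>i\<in>I. (b i)^2)" for b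
    unfolding I_def \<rho>_def by (rule rq_bound[OF B sym n])
  have "rD \<le> (\<Sum>s\<in>S. \<rho> * (\<Sum>i\<in>I. (m s i)^2))" unfolding rDe
    by (rule sum_mono) (use bnd abs_le_D1 in blast)
  also have "\<dots> = \<rho> * Q" unfolding mQ[symmetric] by (rule sum_distrib_left[symmetric])
  finally have rDle: "rD \<le> \<rho> * Q" .
  have rBge: "rB \<ge> - (\<rho> * Q)" using bnd[of a] unfolding rB_def Q_def by linarith
  have rLge: "rL \<ge> - (\<rho> * Q)" using rBe rUL rDle rBge by linarith
  have "rq (\<lambda>i j. (if i = j then 1 else 0) + \<beta> * (if bl j < bl i then B$$(i,j) else 0)) I a = Q + \<beta> * rL"
  proof -
    have "rq (\<lambda>i j. if i = j then 1 else 0) I a = Q"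
      unfolding rq_def Q_def using fI by (intro sum.cong refl) (simp add: delta2 power2_eq_square)
    thus ?thesis unfolding rq_add rq_scale rL_def by simp
  qed
  moreover have "\<beta> * rL \<ge> \<beta> * (- (\<rho> * Q))" using rLge b0 by (rule mult_left_mono)
  ultimately show ?thesis unfolding I_def[symmetric] Q_def[symmetric] \<rho>_def[symmetric]
    by (simp add: algebra_simps)
qed




lemma qf_real_Re:
  fixes A :: "nat \<Rightarrow> nat \<Rightarrow> real"
  shows "Re (qf (\<lambda>i j. complex_of_real (A i j)) I x) = rq A I (\<lambda>i. Re (x i)) + rq A I (\<lambda>i. Im (x i))"
  unfolding qf_def rq_def Re_sum sum.distrib[symmetric]
  by (intro sum.cong refl) (simp add: algebra_simps)

lemma qf_real_Im:
  fixes A :: "nat \<Rightarrow> nat \<Rightarrow> real"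
  assumes sym: "\<And>i j. i \<in> I \<Longrightarrow> j \<in> I \<Longrightarrow> A j i = A i j"
  shows "Im (qf (\<lambda>i j. complex_of_real (A i j)) I x) = 0"
proof -
  define u where "u i = Re (x i)" for i
  define w where "w i = Im (x i)" for i
  have "Im (qf (\<lambda>i j. complex_of_real (A i j)) I x) = (\<Sum>i\<in>I. \<Sum>j\<in>I. A i j * u i * w j) - (\<Sum>i\<in>I. \<Sum>j\<in>I. A i j * w i * u j)"
    unfolding qf_def Im_sum u_def w_def sum_subtractf[symmetric]
    by (intro sum.cong refl) (simp add: algebra_simps)
  also have "(\<Sum>i\<in>I. \<Sum>j\<in>I. A i j * w i * u j) = (\<Sum>j\<in>I. \<Sum>i\<in>I. A i j * w i * u j)"
    by (rule sum.swap)
  also have "\<dots> = (\<Sum>i\<in>I. \<Sum>j\<in>I. A i j * u i * w j)"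
  proof (intro sum.cong refl)
    fix i j assume "i \<in> I" "j \<in> I"
    thus "A j i * w j * u i = A i j * u i * w j" using sym[of i j] by simp
  qed
  finally show ?thesis by simp
qed

lemma rq_mulvec:
  assumes A: "A \<in> carrier_mat n n" and v: "v \<in> carrier_vec n"
  shows "rq (\<lambda>i j. A $$ (i,j)) {0..<n} (\<lambda>i. v $ i) = (\<Sum>i\<in>{0..<n}. v $ i * (A *\<^sub>v v) $ i)"
  unfolding rq_def using mulvec_idx[OF A v]
  by (intro sum.cong refl) (simp add: sum_distrib_left mult.assoc)

lemma real_eigenvalue_exists:
  fixes B :: "real mat"
  assumes B: "B \<in> carrier_mat n n" and sym: "\<And>i j. i<n \<Longrightarrow> j<n \<Longrightarrow> B$$(j,i) = B$$(i,j)" and n: "n > 0"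
  shows "\<exists>r. eigenvalue B r"
proof -
  define Bc where "Bc = map_mat complex_of_real B"
  have Bc: "Bc \<in> carrier_mat n n" using B Bc_def by simp
  from spectrum_non_empty[OF Bc n] obtain l where "eigenvalue Bc l" unfolding spectrum_def by auto
  then obtain z where z: "z \<in> carrier_vec n" "z \<noteq> 0\<^sub>v n" "Bc *\<^sub>v z = l \<cdot>\<^sub>v z"
    unfolding eigenvalue_def eigenvector_def using Bc by auto
  have "qf (\<lambda>i j. complex_of_real (B $$ (i,j))) {0..<n} (\<lambda>i. z $ i) = (\<Sum>i\<in>{0..<n}. cnj (z $ i) * (Bc *\<^sub>v z) $ i)"
    unfolding qf_def
  proof (intro sum.cong refl)
    fix i assume i: "i \<in> {0..<n}"
    have "(Bc *\<^sub>v z) $ i = (\<Sum>j\<in>{0..<n}. Bc $$ (i,j) * z $ j)" using mulvec_idx[OF Bc z(1)] i by simp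
    thus "(\<Sum>j\<in>{0..<n}. cnj (z $ i) * complex_of_real (B $$ (i, j)) * z $ j) = cnj (z $ i) * (Bc *\<^sub>v z) $ i"
      using i B by (simp add: Bc_def sum_distrib_left mult.assoc)
  qed
  also have "\<dots> = l * complex_of_real (\<Sum>i\<in>{0..<n}. (cmod (z $ i))^2)"
    unfolding of_real_sum sum_distrib_left using z(3) z(1)
    by (intro sum.cong refl) (simp, metis complex_norm_square mult.commute of_real_power)
  finally have e: "qf (\<lambda>i j. complex_of_real (B $$ (i,j))) {0..<n} (\<lambda>i. z $ i) = l * complex_of_real (\<Sum>i\<in>{0..<n}. (cmod (z $ i))^2)" .
  have "Im (qf (\<lambda>i j. complex_of_real (B $$ (i,j))) {0..<n} (\<lambda>i. z $ i)) = 0"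
    by (rule qf_real_Im) (use sym in auto)
  hence im: "Im l * (\<Sum>i\<in>{0..<n}. (cmod (z $ i))^2) = 0" using e by simp
  obtain i where i: "i < n" "z $ i \<noteq> 0" using z(1,2) by (metis carrier_vecD eq_vecI index_zero_vec)
  have "(\<Sum>i\<in>{0..<n}. (cmod (z $ i))^2) > 0"
    by (rule sum_pos2[of _ i]) (use i in auto)
  hence "Im l = 0" using im by simp
  hence lr: "l = complex_of_real (Re l)" by (simp add: complex_eq_iff)
  have "poly (char_poly Bc) l = 0" using \<open>eigenvalue Bc l\<close> eigenvalue_root_char_poly[OF Bc] by simp
  hence "poly (map_poly complex_of_real (char_poly B)) (complex_of_real (Re l)) = 0"
    using lr of_real_hom.char_poly_hom[OF B] Bc_def by metis
  hence "poly (char_poly B) (Re l) = 0" by simp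
  hence "eigenvalue B (Re l)" using eigenvalue_root_char_poly[OF B] by simp
  thus ?thesis by blast
qed


lemma rq_cong_on: assumes "\<And>i j. i \<in> I \<Longrightarrow> j \<in> I \<Longrightarrow> A i j = C i j"
  shows "rq A I a = rq C I a"
  unfolding rq_def using assms by (intro sum.cong refl) auto

theorem lemma14:
  fixes ns :: "nat list" and n :: nat and B :: "real mat" and \<beta> :: real
  assumes "ns \<noteq> []"
    and "\<forall>m \<in> set ns. m > 0"
    and "sum_list ns = n"
    and "B \<in> carrier_mat n n"
    and "transpose_mat B = B"
    and "lambda_min B < 0"
    and "0 < \<beta>" and "\<beta> < 1 / spectral_radius (map_mat complex_of_real B)"
  shows "\<exists>k \<in> Omega. eigenvalue (map_mat complex_of_real
           (the (mat_inverse (1\<^sub>m n + \<beta> \<cdot>\<^sub>m block_lower ns B)) * B)) k"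
proof (rule ccontr)
  assume H: "\<not> ?thesis"
  note B = assms(4)
  have n: "n > 0"
  proof -
    obtain m where "m \<in> set ns" using assms(1) by (cases ns) auto
    hence "m \<le> n" "m > 0" using assms(2,3) member_le_sum_list by auto
    thus ?thesis by simp
  qed
  have sym: "B$$(j,i) = B$$(i,j)" if "i < n" "j < n" for i j
  proof -
    have "transpose_mat B $$ (i,j) = B $$ (j,i)" using that B by simp
    thus ?thesis using assms(5) by simp
  qed
  define Bc where "Bc = map_mat complex_of_real B"
  define \<rho> where "\<rho> = spectral_radius Bc"
  have rho: "\<rho> > 0" "\<beta> * \<rho> < 1"
  proof -
    have b: "\<beta> < 1 / \<rho>" using assms(8) \<rho>_def Bc_def by simp
    show "\<rho> > 0"
    proof (rule ccontr)
      assume "\<not> \<rho> > 0"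
      hence "1 / \<rho> \<le> 0" by simp
      thus False using b assms(7) by linarith
    qed
    thus "\<beta> * \<rho> < 1" using b by (simp add: field_simps)
  qed
  define L where "L = block_lower ns B"
  define M where "M = 1\<^sub>m n + \<beta> \<cdot>\<^sub>m L"
  have L: "L \<in> carrier_mat n n" using B unfolding L_def block_lower_def by auto
  have M: "M \<in> carrier_mat n n" using L unfolding M_def by simp
  have Midx: "M $$ (i,j) = (if i = j then 1 else 0) + \<beta> * (if block_of ns j < block_of ns i then B$$(i,j) else 0)"
    if "i < n" "j < n" for i j
    using that B L unfolding M_def L_def block_lower_def by auto
  have Mpos: "rq (\<lambda>i j. M $$ (i,j)) {0..<n} a \<ge> (1 - \<beta> * \<rho>) * (\<Sum>i\<in>{0..<n}. (a i)^2)" for a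
  proof -
    have "rq (\<lambda>i j. M $$ (i,j)) {0..<n} a = rq (\<lambda>i j. (if i = j then 1 else 0) + \<beta> * (if block_of ns j < block_of ns i then B$$(i,j) else 0)) {0..<n} a"
      using Midx by (intro rq_cong_on) auto
    also have "\<dots> \<ge> (1 - \<beta> * \<rho>) * (\<Sum>i\<in>{0..<n}. (a i)^2)"
      unfolding \<rho>_def Bc_def by (rule M_pos[OF B sym n]) (use assms(7) in auto)
    finally show ?thesis .
  qed
  have Mpos2: "rq (\<lambda>i j. M $$ (i,j)) {0..<n} a > 0" if "\<exists>i\<in>{0..<n}. a i \<noteq> 0" for a
  proof -
    from that obtain i where i: "i \<in> {0..<n}" "a i \<noteq> 0" by auto
    have "(\<Sum>i\<in>{0..<n}. (a i)^2) > 0" by (rule sum_pos2[OF _ i(1)]) (use i in auto)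
    hence "(1 - \<beta> * \<rho>) * (\<Sum>i\<in>{0..<n}. (a i)^2) > 0" using rho by simp
    thus ?thesis using Mpos[of a] by linarith
  qed
  have detM: "det M \<noteq> 0"
  proof
    assume "det M = 0"
    then obtain v where v: "v \<in> carrier_vec n" "v \<noteq> 0\<^sub>v n" "M *\<^sub>v v = 0\<^sub>v n"
      using det_0_iff_vec_prod_zero[OF M] by auto
    obtain i where i: "i < n" "v $ i \<noteq> 0" using v(1,2) by (metis carrier_vecD eq_vecI index_zero_vec)
    have "rq (\<lambda>i j. M $$ (i,j)) {0..<n} (\<lambda>i. v $ i) = 0"
      unfolding rq_mulvec[OF M v(1)] v(3) by simp
    moreover have "rq (\<lambda>i j. M $$ (i,j)) {0..<n} (\<lambda>i. v $ i) > 0" by (rule Mpos2) (use i in auto)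
    ultimately show False by simp
  qed
  obtain Mi where Mi: "mat_inverse M = Some Mi"
  proof (cases "mat_inverse M")
    case None
    from mat_inverse(1)[OF M None, of "()"] det_non_zero_imp_unit[OF M detM, of "()"]
    show ?thesis by simp
  next
    case (Some Mi) thus ?thesis using that by simp
  qed
  from mat_inverse(2)[OF M Mi] have MMi: "M * Mi = 1\<^sub>m n" and Mic: "Mi \<in> carrier_mat n n" by auto
  define A where "A = Mi * B"
  have A: "A \<in> carrier_mat n n" using Mic B A_def by simp
  define Ac where "Ac = map_mat complex_of_real A"
  define Mc where "Mc = map_mat complex_of_real M"
  have Ac: "Ac \<in> carrier_mat n n" and Mc: "Mc \<in> carrier_mat n n" using A M Ac_def Mc_def by auto
  have ev: "Re k \<ge> 0" if "eigenvalue Ac k" for k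
  proof -
    have "k \<notin> Omega" using H that unfolding Ac_def A_def M_def L_def Mi[unfolded M_def L_def] by auto
    thus ?thesis unfolding Omega_def by auto
  qed
  have MA: "M * A = B" unfolding A_def using M Mic B MMi
    by (simp add: assoc_mult_mat[symmetric, of M n n Mi n B n])
  have BMA: "Bc = Mc * Ac" unfolding Bc_def Mc_def Ac_def
    using of_real_hom.mat_hom_mult[OF M A] MA by simp
  have psd: "Re (qf (\<lambda>i j. Bc $$ (i,j)) {0..<n} x) \<ge> 0" for x
  proof (rule psd_factor[OF Ac Mc BMA])
    show "Bc $$ (j,i) = cnj (Bc $$ (i,j))" if "i < n" "j < n" for i j
      using that B sym[OF that] unfolding Bc_def by simp
    show "Re k \<ge> 0" if "eigenvalue Ac k" for k using ev that by simp
    show "Re (qf (\<lambda>i j. Mc $$ (i,j)) {0..<n} y) > 0" if "\<exists>i\<in>{0..<n}. y i \<noteq> 0" for y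
    proof -
      have "qf (\<lambda>i j. Mc $$ (i,j)) {0..<n} y = qf (\<lambda>i j. complex_of_real (M $$ (i,j))) {0..<n} y"
        using M unfolding Mc_def by (intro qf_cong_on) auto
      hence e: "Re (qf (\<lambda>i j. Mc $$ (i,j)) {0..<n} y) = rq (\<lambda>i j. M $$ (i,j)) {0..<n} (\<lambda>i. Re (y i)) + rq (\<lambda>i j. M $$ (i,j)) {0..<n} (\<lambda>i. Im (y i))"
        using qf_real_Re by simp
      from that obtain i where i: "i \<in> {0..<n}" "y i \<noteq> 0" by auto
      have ge: "rq (\<lambda>i j. M $$ (i,j)) {0..<n} a \<ge> 0" for a
        using Mpos[of a] rho by (meson diff_gt_0_iff_gt less_eq_real_def mult_nonneg_nonneg sum_nonneg zero_le_power2 order_trans)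
      show ?thesis
      proof (cases "Re (y i) = 0")
        case True
        hence "Im (y i) \<noteq> 0" using i(2) by (simp add: complex_eq_iff)
        hence "rq (\<lambda>i j. M $$ (i,j)) {0..<n} (\<lambda>i. Im (y i)) > 0" by (intro Mpos2) (use i in auto)
        thus ?thesis using e ge by (smt (verit))
      next
        case False
        hence "rq (\<lambda>i j. M $$ (i,j)) {0..<n} (\<lambda>i. Re (y i)) > 0" by (intro Mpos2) (use i in auto)
        thus ?thesis using e ge by (smt (verit))
      qed
    qed
  qed
  have fin: "finite {k. eigenvalue B k}" using card_finite_spectrum(1)[OF B] unfolding spectrum_def .
  have ne: "{k. eigenvalue B k} \<noteq> {}" using real_eigenvalue_exists[OF B sym n] by auto
  have "lambda_min B \<in> {k. eigenvalue B k}" unfolding lambda_min_def using fin ne by (rule Min_in)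
  then obtain v where v: "v \<in> carrier_vec n" "v \<noteq> 0\<^sub>v n" "B *\<^sub>v v = lambda_min B \<cdot>\<^sub>v v"
    unfolding eigenvalue_def eigenvector_def using B by auto
  obtain i where i: "i < n" "v $ i \<noteq> 0" using v(1,2) by (metis carrier_vecD eq_vecI index_zero_vec)
  have pos: "(\<Sum>i\<in>{0..<n}. (v $ i)^2) > 0" by (rule sum_pos2[of _ i]) (use i in auto)
  have "rq (\<lambda>i j. B $$ (i,j)) {0..<n} (\<lambda>i. v $ i) = lambda_min B * (\<Sum>i\<in>{0..<n}. (v $ i)^2)"
    unfolding rq_mulvec[OF B v(1)] v(3) sum_distrib_left using v(1)
    by (intro sum.cong refl) (simp add: power2_eq_square)
  also have "\<dots> < 0" using assms(6) pos by (simp add: mult_neg_pos)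
  finally have neg: "rq (\<lambda>i j. B $$ (i,j)) {0..<n} (\<lambda>i. v $ i) < 0" .
  have "Re (qf (\<lambda>i j. Bc $$ (i,j)) {0..<n} (\<lambda>i. complex_of_real (v $ i))) = rq (\<lambda>i j. B $$ (i,j)) {0..<n} (\<lambda>i. v $ i)"
  proof -
    have "qf (\<lambda>i j. Bc $$ (i,j)) {0..<n} (\<lambda>i. complex_of_real (v $ i)) = qf (\<lambda>i j. complex_of_real (B $$ (i,j))) {0..<n} (\<lambda>i. complex_of_real (v $ i))"
      using B unfolding Bc_def by (intro qf_cong_on) auto
    thus ?thesis using qf_real_Re[of "\<lambda>i j. B $$ (i,j)" "{0..<n}" "\<lambda>i. complex_of_real (v $ i)"]
      by (simp add: rq_def)
  qed
  thus False using psd[of "\<lambda>i. complex_of_real (v $ i)"] neg by simp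
qed


end
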